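(* For every circuit $c$ there is a safe circuit $d$ such that $c$ and $d$ are equal modulo $E$.
   Context: A circuit is a morphism of the free symmetric strict monoidal category whose objects are natural numbers (tensor = addition) generated by $\mathsf{discard}:1\to 0$, $\mathsf{copy}:1\to 2$, $\mathsf{zero}:0\to1$, $\mathsf{add}:2\to1$, $\mathsf{one}:0\to 1$, $\mathsf{and}:2\to 1$, considered up to the laws of symmetric monoidal categories. Composition is diagrammatic ($f;g$ = first $f$ then $g$), $\sigma$ is the symmetry $2\to2$, $\mathsf{copy}_n$, $\mathsf{discard}_n$ are the evident composites. $E$ is the set of equations: $\mathsf{copy};\sigma=\mathsf{copy}$; $\mathsf{copy};(\mathsf{copy}\otimes \mathrm{id}_1)=\mathsf{copy};(\mathrm{id}_1\otimes\mathsf{copy})$; $\mathsf{copy};(\mathsf{discard}\otimes\mathrm{id}_1)=\mathrm{id}_1$; for every circuit $f:a\to b$, $f;\mathsf{copy}_b=\mathsf{copy}_a;(f\otimes f)$ and $f;\mathsf{discard}_b=\mathsf{discard}_a$; commutativity, associativity and unit laws for $(\mathsf{add},\mathsf{zero})$ and for $(\mathsf{and},\mathsf{one})$; $\mathsf{copy};\mathsf{and}=\mathrm{id}_1$; $\mathsf{copy};\mathsf{add}=\mathsf{discard};\mathsf{zero}$; and distributivity $(\mathrm{id}_1\otimes\mathsf{add});\mathsf{and}=(\mathsf{copy}\otimes\mathrm{id}_2);(\mathrm{id}_1\otimes\sigma\otimes\mathrm{id}_1);(\mathsf{and}\otimes\mathsf{and});\mathsf{add}$. "Equal modulo $E$"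 means related by the smallest congruence (w.r.t. composition and tensor) containing $E$; morphisms of the quotient are the boolean circuits, which correspond exactly to boolean functions $\mathbb{Z}_2^a\to\mathbb{Z}_2^b$ (with $\mathsf{add}$ = XOR, $\mathsf{and}$ = AND). View a circuit as a directed graph whose nodes are wires and whose edges go from each input wire of a generator occurrence to each of its output wires. A circuit $c$ is safe if for every occurrence of $\mathsf{and}$ in $c$, there is no input port of $c$ from which both input ports of that $\mathsf{and}$ are reachable by a forward path. *)

theory Defs
  imports Main
begin

datatype gen = Discard | Copy | Zero | Add | One | And

fun gen_dom :: "gen \<Rightarrow> nat" where
  "gen_dom Discard = 1" | "gen_dom Copy = 1" | "gen_dom Zero = 0"
| "gen_dom Add = 2" | "gen_dom One = 0" | "gen_dom And = 2"

fun gen_cod :: "gen \<Rightarrow> nat" where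
  "gen_cod Discard = 0" | "gen_cod Copy = 2" | "gen_cod Zero = 1"
| "gen_cod Add = 1" | "gen_cod One = 1" | "gen_cod And = 1"

text \<open>Terms: generators, identities, the symmetry 2 -> 2, diagrammatic composition
  (Seq f g = f;g) and tensor.\<close>
datatype circ = Gen gen | Id nat | Sym | Seq circ circ | Par circ circ

inductive typed :: "circ \<Rightarrow> nat \<Rightarrow> nat \<Rightarrow> bool" where
  "typed (Gen g) (gen_dom g) (gen_cod g)"
| "typed (Id n) n n"
| "typed Sym 2 2"
| "typed f a k \<Longrightarrow> typed g k b \<Longrightarrow> typed (Seq f g) a b"
| "typed f a b \<Longrightarrow> typed g c d \<Longrightarrow> typed (Par f g) (a + c) (b + d)"

text \<open>braid n : 1+n -> n+1 moves the first wire past n wires.\<close>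
fun braid :: "nat \<Rightarrow> circ" where
  "braid 0 = Id 1"
| "braid (Suc n) = Seq (Par Sym (Id n)) (Par (Id 1) (braid n))"

fun swap :: "nat \<Rightarrow> nat \<Rightarrow> circ" where
  "swap 0 n = Id n"
| "swap (Suc m) n = Seq (Par (Id 1) (swap m n)) (Par (braid n) (Id m))"

text \<open>copy_n : n -> 2n, with outputs (x_1..x_n, x_1..x_n).\<close>
fun copyn :: "nat \<Rightarrow> circ" where
  "copyn 0 = Id 0"
| "copyn (Suc n) = Seq (Par (Gen Copy) (copyn n)) (Par (Id 1) (Par (braid n) (Id n)))"

fun discardn :: "nat \<Rightarrow> circ" where
  "discardn 0 = Id 0"
| "discardn (Suc n) = Par (Gen Discard) (discardn n)"

inductive eqv :: "circ \<Rightarrow> circ \<Rightarrow> bool" where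
  refl: "eqv f f"
| sym: "eqv f g \<Longrightarrow> eqv g f"
| trans: "eqv f g \<Longrightarrow> eqv g h \<Longrightarrow> eqv f h"
| cong_seq: "eqv f f' \<Longrightarrow> eqv g g' \<Longrightarrow> eqv (Seq f g) (Seq f' g')"
| cong_par: "eqv f f' \<Longrightarrow> eqv g g' \<Longrightarrow> eqv (Par f g) (Par f' g')"
| seq_assoc: "typed f a b \<Longrightarrow> typed g b c \<Longrightarrow> typed h c d \<Longrightarrow>
     eqv (Seq (Seq f g) h) (Seq f (Seq g h))"
| seq_idl: "typed f a b \<Longrightarrow> eqv (Seq (Id a) f) f"
| seq_idr: "typed f a b \<Longrightarrow> eqv (Seq f (Id b)) f"
| par_assoc: "typed f a b \<Longrightarrow> typed g c d \<Longrightarrow> typed h e k \<Longrightarrow>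
     eqv (Par (Par f g) h) (Par f (Par g h))"
| par_unitl: "typed f a b \<Longrightarrow> eqv (Par (Id 0) f) f"
| par_unitr: "typed f a b \<Longrightarrow> eqv (Par f (Id 0)) f"
| par_id: "eqv (Par (Id m) (Id n)) (Id (m + n))"
| interchange: "typed f a b \<Longrightarrow> typed f' b c \<Longrightarrow> typed g d e \<Longrightarrow> typed g' e k \<Longrightarrow>
     eqv (Seq (Par f g) (Par f' g')) (Par (Seq f f') (Seq g g'))"
| sym_invol: "eqv (Seq Sym Sym) (Id 2)"
| yang_baxter: "eqv (Seq (Seq (Par Sym (Id 1)) (Par (Id 1) Sym)) (Par Sym (Id 1)))
                    (Seq (Seq (Par (Id 1) Sym) (Par Sym (Id 1))) (Par (Id 1) Sym))"
| swap_nat: "typed f a b \<Longrightarrow> typed g c d \<Longrightarrow>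
     eqv (Seq (Par f g) (swap b d)) (Seq (swap a c) (Par g f))"
| copy_comm: "eqv (Seq (Gen Copy) Sym) (Gen Copy)"
| copy_assoc: "eqv (Seq (Gen Copy) (Par (Gen Copy) (Id 1))) (Seq (Gen Copy) (Par (Id 1) (Gen Copy)))"
| copy_unit: "eqv (Seq (Gen Copy) (Par (Gen Discard) (Id 1))) (Id 1)"
| copy_nat: "typed f a b \<Longrightarrow> eqv (Seq f (copyn b)) (Seq (copyn a) (Par f f))"
| discard_nat: "typed f a b \<Longrightarrow> eqv (Seq f (discardn b)) (discardn a)"
| add_comm: "eqv (Seq Sym (Gen Add)) (Gen Add)"
| add_assoc: "eqv (Seq (Par (Gen Add) (Id 1)) (Gen Add)) (Seq (Par (Id 1) (Gen Add)) (Gen Add))"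
| add_unit: "eqv (Seq (Par (Gen Zero) (Id 1)) (Gen Add)) (Id 1)"
| and_comm: "eqv (Seq Sym (Gen And)) (Gen And)"
| and_assoc: "eqv (Seq (Par (Gen And) (Id 1)) (Gen And)) (Seq (Par (Id 1) (Gen And)) (Gen And))"
| and_unit: "eqv (Seq (Par (Gen One) (Id 1)) (Gen And)) (Id 1)"
| copy_and: "eqv (Seq (Gen Copy) (Gen And)) (Id 1)"
| copy_add: "eqv (Seq (Gen Copy) (Gen Add)) (Seq (Gen Discard) (Gen Zero))"
| distrib: "eqv (Seq (Par (Id 1) (Gen Add)) (Gen And))
     (Seq (Seq (Seq (Par (Gen Copy) (Id 2)) (Par (Id 1) (Par Sym (Id 1))))
               (Par (Gen And) (Gen And))) (Gen Add))"

fun cdom :: "circ \<Rightarrow> nat" where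
  "cdom (Gen g) = gen_dom g"
| "cdom (Id n) = n"
| "cdom Sym = 2"
| "cdom (Seq f g) = cdom f"
| "cdom (Par f g) = cdom f + cdom g"

text \<open>Given, for each input wire of a circuit, the set of input ports of the ambient circuit
  from which that wire is reachable by a forward path in the wire graph, compute the
  same for each output wire. Edges go from each input wire of a generator to each of
  its output wires; identities and symmetries just route wires.\<close>
fun outdeps :: "nat set list \<Rightarrow> circ \<Rightarrow> nat set list" where
  "outdeps ds (Gen g) = replicate (gen_cod g) (\<Union> (set ds))"
| "outdeps ds (Id n) = ds"
| "outdeps ds Sym = rev ds"
| "outdeps ds (Seq f g) = outdeps (outdeps ds f) g"
| "outdeps ds (Par f g) = outdeps (take (cdom f) ds) f @ outdeps (drop (cdom f) ds) g"

text \<open>safe_in ds c: no occurrence of and in c has both input wires reachable from a common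
  input port, where ds gives the reachability sets of c's input wires.\<close>
fun safe_in :: "nat set list \<Rightarrow> circ \<Rightarrow> bool" where
  "safe_in ds (Gen g) = (g = And \<longrightarrow> ds ! 0 \<inter> ds ! 1 = {})"
| "safe_in ds (Id n) = True"
| "safe_in ds Sym = True"
| "safe_in ds (Seq f g) = (safe_in ds f \<and> safe_in (outdeps ds f) g)"
| "safe_in ds (Par f g) = (safe_in (take (cdom f) ds) f \<and> safe_in (drop (cdom f) ds) g)"

text \<open>Input port i of c is the wire reachable exactly from i (paths of length 0).\<close>
definition safe :: "circ \<Rightarrow> bool" where
  "safe c = safe_in (map (\<lambda>i. {i}) [0..<cdom c]) c"

end

theory Submission
  imports Defs
begin


fun ty :: "circ \<Rightarrow> (nat \<times> nat) option" where
  "ty (Gen g) = Some (gen_dom g, gen_cod g)"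
| "ty (Id n) = Some (n, n)"
| "ty Sym = Some (2, 2)"
| "ty (Seq f g) = (case ty f of None \<Rightarrow> None | Some (a, k) \<Rightarrow>
     (case ty g of None \<Rightarrow> None | Some (k', b) \<Rightarrow> if k = k' then Some (a, b) else None))"
| "ty (Par f g) = (case ty f of None \<Rightarrow> None | Some (a, b) \<Rightarrow>
     (case ty g of None \<Rightarrow> None | Some (c, d) \<Rightarrow> Some (a + c, b + d)))"

lemma typed_ty: "typed c a b \<Longrightarrow> ty c = Some (a, b)"
  by (induction rule: typed.induct) auto

lemma ty_typed: "ty c = Some (a, b) \<Longrightarrow> typed c a b"
proof (induction c arbitrary: a b)
  case (Gen g) then show ?case using typed.intros(1)[of g] by auto
next
  case (Id n) then show ?case using typed.intros(2)[of n] by auto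
next
  case Sym then show ?case using typed.intros(3) by auto
next
  case (Seq f g)
  then obtain k where "ty f = Some (a, k)" "ty g = Some (k, b)"
    by (auto split: option.splits if_splits)
  then show ?case using Seq.IH typed.intros(4)[of f a k g b] by auto
next
  case (Par f g)
  then obtain a1 b1 c1 d1 where "ty f = Some (a1, b1)" "ty g = Some (c1, d1)" "a = a1 + c1" "b = b1 + d1"
    by (auto split: option.splits)
  then show ?case using Par.IH typed.intros(5)[of f a1 b1 g c1 d1] by auto
qed

lemma typed_iff: "typed c a b \<longleftrightarrow> ty c = Some (a, b)"
  using typed_ty ty_typed by blast

definition wt :: "circ \<Rightarrow> bool" where "wt c \<longleftrightarrow> ty c \<noteq> None"

lemma wtD: "wt c \<Longrightarrow> \<exists>a b. ty c = Some (a, b)"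
  unfolding wt_def by auto

lemmas [trans] = eqv.trans

lemma E_assoc: "wt (Seq (Seq f g) h) \<Longrightarrow> eqv (Seq (Seq f g) h) (Seq f (Seq g h))"
proof -
  assume "wt (Seq (Seq f g) h)"
  then obtain a b c d where "ty f = Some (a, b)" "ty g = Some (b, c)" "ty h = Some (c, d)"
    unfolding wt_def by (auto split: option.splits if_splits)
  then show ?thesis by (intro eqv.seq_assoc[of f a b g c h d]) (auto simp: typed_iff)
qed

lemma E_assoc': "wt (Seq (Seq f g) h) \<Longrightarrow> eqv (Seq f (Seq g h)) (Seq (Seq f g) h)"
  by (rule eqv.sym, rule E_assoc)

lemma E_idl: "wt (Seq (Id a) f) \<Longrightarrow> eqv (Seq (Id a) f) f"
proof -
  assume "wt (Seq (Id a) f)"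
  then obtain b where "ty f = Some (a, b)"
    unfolding wt_def by (auto split: option.splits if_splits)
  then show ?thesis by (intro eqv.seq_idl[of f a b]) (auto simp: typed_iff)
qed

lemma E_idr: "wt (Seq f (Id b)) \<Longrightarrow> eqv (Seq f (Id b)) f"
proof -
  assume "wt (Seq f (Id b))"
  then obtain a where "ty f = Some (a, b)"
    unfolding wt_def by (auto split: option.splits if_splits)
  then show ?thesis by (intro eqv.seq_idr[of f a b]) (auto simp: typed_iff)
qed

lemma E_passoc: "wt (Par (Par f g) h) \<Longrightarrow> eqv (Par (Par f g) h) (Par f (Par g h))"
proof -
  assume "wt (Par (Par f g) h)"
  then obtain a b c d e k where "ty f = Some (a, b)" "ty g = Some (c, d)" "ty h = Some (e, k)"
    unfolding wt_def by (auto split: option.splits if_splits)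
  then show ?thesis by (intro eqv.par_assoc[of f a b g c d h e k]) (auto simp: typed_iff)
qed

lemma E_passoc': "wt (Par (Par f g) h) \<Longrightarrow> eqv (Par f (Par g h)) (Par (Par f g) h)"
  by (rule eqv.sym, rule E_passoc)

lemma E_unitl: "wt f \<Longrightarrow> eqv (Par (Id 0) f) f"
proof -
  assume "wt f"
  then obtain a b where "ty f = Some (a, b)"
    unfolding wt_def by (auto split: option.splits if_splits)
  then show ?thesis by (intro eqv.par_unitl[of f a b]) (auto simp: typed_iff)
qed

lemma E_unitr: "wt f \<Longrightarrow> eqv (Par f (Id 0)) f"
proof -
  assume "wt f"
  then obtain a b where "ty f = Some (a, b)"
    unfolding wt_def by (auto split: option.splits if_splits)
  then show ?thesis by (intro eqv.par_unitr[of f a b]) (auto simp: typed_iff)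
qed

lemma E_xch: "wt (Par (Seq f f') (Seq g g')) \<Longrightarrow>
   eqv (Seq (Par f g) (Par f' g')) (Par (Seq f f') (Seq g g'))"
proof -
  assume "wt (Par (Seq f f') (Seq g g'))"
  then obtain a b c d e k where "ty f = Some (a, b)" "ty f' = Some (b, c)"
    "ty g = Some (d, e)" "ty g' = Some (e, k)"
    unfolding wt_def by (auto split: option.splits if_splits)
  then show ?thesis by (intro eqv.interchange[of f a b f' c g d e g' k]) (auto simp: typed_iff)
qed

lemma E_xch': "wt (Par (Seq f f') (Seq g g')) \<Longrightarrow>
   eqv (Par (Seq f f') (Seq g g')) (Seq (Par f g) (Par f' g'))"
  by (rule eqv.sym, rule E_xch)

lemma E_seqL: "eqv f f' \<Longrightarrow> eqv (Seq f g) (Seq f' g)"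
  by (rule eqv.cong_seq) (auto intro: eqv.refl)
lemma E_seqR: "eqv g g' \<Longrightarrow> eqv (Seq f g) (Seq f g')"
  by (rule eqv.cong_seq) (auto intro: eqv.refl)
lemma E_parL: "eqv f f' \<Longrightarrow> eqv (Par f g) (Par f' g)"
  by (rule eqv.cong_par) (auto intro: eqv.refl)
lemma E_parR: "eqv g g' \<Longrightarrow> eqv (Par f g) (Par f g')"
  by (rule eqv.cong_par) (auto intro: eqv.refl)

lemma E_swapnat: "ty f = Some (a, b) \<Longrightarrow> ty g = Some (c, d) \<Longrightarrow>
   eqv (Seq (Par f g) (swap b d)) (Seq (swap a c) (Par g f))"
  by (rule eqv.swap_nat[of f a b g c d]) (auto simp: typed_iff)

lemma E_copynat: "ty f = Some (a, b) \<Longrightarrow> eqv (Seq f (copyn b)) (Seq (copyn a) (Par f f))"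
  by (rule eqv.copy_nat[of f a b]) (auto simp: typed_iff)

lemma E_discnat: "ty f = Some (a, b) \<Longrightarrow> eqv (Seq f (discardn b)) (discardn a)"
  by (rule eqv.discard_nat[of f a b]) (auto simp: typed_iff)

lemma ty_braid[simp]: "ty (braid n) = Some (Suc n, Suc n)"
  by (induction n) auto
lemma ty_swap[simp]: "ty (swap m n) = Some (m + n, n + m)"
  by (induction m) auto
lemma ty_copyn[simp]: "ty (copyn n) = Some (n, n + n)"
  by (induction n) auto
lemma ty_discardn[simp]: "ty (discardn n) = Some (n, 0)"
  by (induction n) auto


declare wt_def[simp]
notation eqv (infix "\<approx>" 50)

lemma E_refl: "x \<approx> x" by (rule eqv.refl)

abbreviation Disc where "Disc \<equiv> Gen Discard"
abbreviation Cpy where "Cpy \<equiv> Gen Copy"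

lemma L_disc_add: "discardn (m + n) \<approx> Par (discardn m) (discardn n)"
proof (induction m)
  case 0
  show ?case by simp (rule eqv.sym, rule E_unitl, simp)
next
  case (Suc m)
  have "discardn (Suc m + n) = Par Disc (discardn (m + n))" by simp
  also have "... \<approx> Par Disc (Par (discardn m) (discardn n))" by (rule E_parR, rule Suc)
  also have "... \<approx> Par (Par Disc (discardn m)) (discardn n)" by (rule E_passoc') simp
  finally show ?case by simp
qed

lemma par_id': "Par (Id m) (Id n) \<approx> Id k" if "k = m + n" using eqv.par_id[of m n] that by simp
lemma par_id'': "Id k \<approx> Par (Id m) (Id n)" if "k = m + n" by (rule eqv.sym, rule par_id', fact)

lemma BR: "swap 1 n \<approx> braid n"
proof -
  have "swap 1 n = Seq (Par (Id 1) (Id n)) (Par (braid n) (Id 0))" by simp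
  also have "... \<approx> Seq (Id (Suc n)) (Par (braid n) (Id 0))" by (rule E_seqL, rule par_id') simp
  also have "... \<approx> Par (braid n) (Id 0)" by (rule E_idl) simp
  also have "... \<approx> braid n" by (rule E_unitr) simp
  finally show ?thesis .
qed

lemma BR1: "braid 1 \<approx> Sym"
proof -
  have "braid 1 = Seq (Par Sym (Id 0)) (Par (Id 1) (Id 1))" by (simp add: numeral_eq_Suc)
  also have "... \<approx> Seq Sym (Par (Id 1) (Id 1))" by (rule E_seqL, rule E_unitr) simp
  also have "... \<approx> Seq Sym (Id 2)" by (rule E_seqR, rule par_id') simp
  also have "... \<approx> Sym" by (rule E_idr) simp
  finally show ?thesis .
qed

lemma BRd1: "Seq (braid n) (Par (discardn n) (Id 1)) \<approx> Par (Id 1) (discardn n)"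
proof -
  have "Seq (braid n) (Par (discardn n) (Id 1)) \<approx> Seq (swap 1 n) (Par (discardn n) (Id 1))"
    by (rule E_seqL, rule eqv.sym, rule BR)
  also have "... \<approx> Seq (Par (Id 1) (discardn n)) (swap 1 0)"
    by (rule eqv.sym, rule E_swapnat) simp_all
  also have "... \<approx> Seq (Par (Id 1) (discardn n)) (Id 1)"
    using BR[of 0] by (intro E_seqR) simp
  also have "... \<approx> Par (Id 1) (discardn n)" by (rule E_idr) simp
  finally show ?thesis .
qed

lemma BRd2: "Seq (braid n) (Par (Id n) Disc) \<approx> Par Disc (Id n)"
proof -
  have "Seq (braid n) (Par (Id n) Disc) \<approx> Seq (swap 1 n) (Par (Id n) Disc)"
    by (rule E_seqL, rule eqv.sym, rule BR)
  also have "... \<approx> Seq (Par Disc (Id n)) (swap 0 n)"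
    by (rule eqv.sym, rule E_swapnat) simp_all
  also have "... = Seq (Par Disc (Id n)) (Id n)" by simp
  also have "... \<approx> Par Disc (Id n)" by (rule E_idr) simp
  finally show ?thesis .
qed

lemma CU1: "Seq Cpy (Par Disc (Id 1)) \<approx> Id 1" by (rule eqv.copy_unit)

lemma CU2: "Seq Cpy (Par (Id 1) Disc) \<approx> Id 1"
proof -
  have "Seq Cpy (Par (Id 1) Disc) \<approx> Seq (Seq Cpy Sym) (Par (Id 1) Disc)"
    by (rule E_seqL, rule eqv.sym, rule eqv.copy_comm)
  also have "... \<approx> Seq Cpy (Seq Sym (Par (Id 1) Disc))" by (rule E_assoc) simp
  also have "... \<approx> Seq Cpy (Seq (braid 1) (Par (Id 1) Disc))"
    by (rule E_seqR, rule E_seqL, rule eqv.sym, rule BR1)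
  also have "... \<approx> Seq Cpy (Par Disc (Id 1))" by (rule E_seqR, rule BRd2)
  also have "... \<approx> Id 1" by (rule CU1)
  finally show ?thesis .
qed

lemma LC: "Seq (copyn n) (Par (discardn n) (Id n)) \<approx> Id n"
proof (induction n)
  case 0
  have "Seq (copyn 0) (Par (discardn 0) (Id 0)) = Seq (Id 0) (Par (Id 0) (Id 0))" by simp
  also have "... \<approx> Par (Id 0) (Id 0)" by (rule E_idl) simp
  also have "... \<approx> Id 0" by (rule par_id') simp
  finally show ?case .
next
  case (Suc n)
  let ?D = "discardn n"
  have "Par (Par Disc ?D) (Id (Suc n)) \<approx> Par (Par Disc ?D) (Par (Id 1) (Id n))"
    by (rule E_parR, rule par_id'') simp
  also have "... \<approx> Par Disc (Par ?D (Par (Id 1) (Id n)))" by (rule E_passoc) simp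
  also have "... \<approx> Par Disc (Par (Par ?D (Id 1)) (Id n))" by (rule E_parR, rule E_passoc') simp
  finally have 1: "Par (Par Disc ?D) (Id (Suc n)) \<approx> Par Disc (Par (Par ?D (Id 1)) (Id n))" .
  have "Seq (Par (Id 1) (Par (braid n) (Id n))) (Par (Par Disc ?D) (Id (Suc n)))
     \<approx> Seq (Par (Id 1) (Par (braid n) (Id n))) (Par Disc (Par (Par ?D (Id 1)) (Id n)))"
    by (rule E_seqR, rule 1)
  also have "... \<approx> Par (Seq (Id 1) Disc) (Seq (Par (braid n) (Id n)) (Par (Par ?D (Id 1)) (Id n)))"
    by (rule E_xch) simp
  also have "... \<approx> Par (Seq (Id 1) Disc) (Par (Seq (braid n) (Par ?D (Id 1))) (Seq (Id n) (Id n)))"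
    by (rule E_parR, rule E_xch) simp
  also have "... \<approx> Par Disc (Par (Seq (braid n) (Par ?D (Id 1))) (Seq (Id n) (Id n)))"
    by (rule E_parL, rule E_idl) simp
  also have "... \<approx> Par Disc (Par (Par (Id 1) ?D) (Seq (Id n) (Id n)))"
    by (rule E_parR, rule E_parL, rule BRd1)
  also have "... \<approx> Par Disc (Par (Par (Id 1) ?D) (Id n))"
    by (rule E_parR, rule E_parR, rule E_idl) simp
  also have "... \<approx> Par Disc (Par (Id 1) (Par ?D (Id n)))"
    by (rule E_parR, rule E_passoc) simp
  also have "... \<approx> Par (Par Disc (Id 1)) (Par ?D (Id n))"
    by (rule E_passoc') simp
  finally have 2: "Seq (Par (Id 1) (Par (braid n) (Id n))) (Par (Par Disc ?D) (Id (Suc n)))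
     \<approx> Par (Par Disc (Id 1)) (Par ?D (Id n))" .
  have "Seq (copyn (Suc n)) (Par (discardn (Suc n)) (Id (Suc n)))
    = Seq (Seq (Par Cpy (copyn n)) (Par (Id 1) (Par (braid n) (Id n)))) (Par (Par Disc ?D) (Id (Suc n)))"
    by simp
  also have "... \<approx> Seq (Par Cpy (copyn n)) (Seq (Par (Id 1) (Par (braid n) (Id n))) (Par (Par Disc ?D) (Id (Suc n))))"
    by (rule E_assoc) simp
  also have "... \<approx> Seq (Par Cpy (copyn n)) (Par (Par Disc (Id 1)) (Par ?D (Id n)))"
    by (rule E_seqR, rule 2)
  also have "... \<approx> Par (Seq Cpy (Par Disc (Id 1))) (Seq (copyn n) (Par ?D (Id n)))"
    by (rule E_xch) simp
  also have "... \<approx> Par (Id 1) (Id n)"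
    by (rule eqv.cong_par, rule CU1, rule Suc)
  also have "... \<approx> Id (Suc n)" by (rule par_id') simp
  finally show ?case .
qed

lemma RC: "Seq (copyn n) (Par (Id n) (discardn n)) \<approx> Id n"
proof (induction n)
  case 0
  have "Seq (copyn 0) (Par (Id 0) (discardn 0)) = Seq (Id 0) (Par (Id 0) (Id 0))" by simp
  also have "... \<approx> Par (Id 0) (Id 0)" by (rule E_idl) simp
  also have "... \<approx> Id 0" by (rule par_id') simp
  finally show ?case .
next
  case (Suc n)
  let ?D = "discardn n"
  have "Par (Id (Suc n)) (Par Disc ?D) \<approx> Par (Par (Id 1) (Id n)) (Par Disc ?D)"
    by (rule E_parL, rule par_id'') simp
  also have "... \<approx> Par (Id 1) (Par (Id n) (Par Disc ?D))" by (rule E_passoc) simp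
  also have "... \<approx> Par (Id 1) (Par (Par (Id n) Disc) ?D)" by (rule E_parR, rule E_passoc') simp
  finally have 1: "Par (Id (Suc n)) (Par Disc ?D) \<approx> Par (Id 1) (Par (Par (Id n) Disc) ?D)" .
  have "Seq (Par (Id 1) (Par (braid n) (Id n))) (Par (Id (Suc n)) (Par Disc ?D))
     \<approx> Seq (Par (Id 1) (Par (braid n) (Id n))) (Par (Id 1) (Par (Par (Id n) Disc) ?D))"
    by (rule E_seqR, rule 1)
  also have "... \<approx> Par (Seq (Id 1) (Id 1)) (Seq (Par (braid n) (Id n)) (Par (Par (Id n) Disc) ?D))"
    by (rule E_xch) simp
  also have "... \<approx> Par (Seq (Id 1) (Id 1)) (Par (Seq (braid n) (Par (Id n) Disc)) (Seq (Id n) ?D))"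
    by (rule E_parR, rule E_xch) simp
  also have "... \<approx> Par (Id 1) (Par (Seq (braid n) (Par (Id n) Disc)) (Seq (Id n) ?D))"
    by (rule E_parL, rule E_idl) simp
  also have "... \<approx> Par (Id 1) (Par (Par Disc (Id n)) (Seq (Id n) ?D))"
    by (rule E_parR, rule E_parL, rule BRd2)
  also have "... \<approx> Par (Id 1) (Par (Par Disc (Id n)) ?D)"
    by (rule E_parR, rule E_parR, rule E_idl) simp
  also have "... \<approx> Par (Id 1) (Par Disc (Par (Id n) ?D))"
    by (rule E_parR, rule E_passoc) simp
  also have "... \<approx> Par (Par (Id 1) Disc) (Par (Id n) ?D)"
    by (rule E_passoc') simp
  finally have 2: "Seq (Par (Id 1) (Par (braid n) (Id n))) (Par (Id (Suc n)) (Par Disc ?D))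
     \<approx> Par (Par (Id 1) Disc) (Par (Id n) ?D)" .
  have "Seq (copyn (Suc n)) (Par (Id (Suc n)) (discardn (Suc n)))
    = Seq (Seq (Par Cpy (copyn n)) (Par (Id 1) (Par (braid n) (Id n)))) (Par (Id (Suc n)) (Par Disc ?D))"
    by simp
  also have "... \<approx> Seq (Par Cpy (copyn n)) (Seq (Par (Id 1) (Par (braid n) (Id n))) (Par (Id (Suc n)) (Par Disc ?D)))"
    by (rule E_assoc) simp
  also have "... \<approx> Seq (Par Cpy (copyn n)) (Par (Par (Id 1) Disc) (Par (Id n) ?D))"
    by (rule E_seqR, rule 2)
  also have "... \<approx> Par (Seq Cpy (Par (Id 1) Disc)) (Seq (copyn n) (Par (Id n) ?D))"
    by (rule E_xch) simp
  also have "... \<approx> Par (Id 1) (Id n)"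
    by (rule eqv.cong_par, rule CU2, rule Suc)
  also have "... \<approx> Id (Suc n)" by (rule par_id') simp
  finally show ?case .
qed



datatype expr = V nat | Zr | On | Pl expr expr | Ml expr expr

fun vars :: "expr \<Rightarrow> nat set" where
  "vars (V i) = {i}" | "vars Zr = {}" | "vars On = {}"
| "vars (Pl e1 e2) = vars e1 \<union> vars e2" | "vars (Ml e1 e2) = vars e1 \<union> vars e2"

definition vb :: "nat \<Rightarrow> expr \<Rightarrow> bool" where "vb a e \<longleftrightarrow> (\<forall>v\<in>vars e. v < a)"

lemma vb_simps[simp]: "vb a (V i) = (i < a)" "vb a Zr" "vb a On"
  "vb a (Pl e1 e2) = (vb a e1 \<and> vb a e2)" "vb a (Ml e1 e2) = (vb a e1 \<and> vb a e2)"
  by (auto simp: vb_def)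

fun subst :: "expr list \<Rightarrow> expr \<Rightarrow> expr" where
  "subst s (V i) = s ! i" | "subst s Zr = Zr" | "subst s On = On"
| "subst s (Pl e1 e2) = Pl (subst s e1) (subst s e2)"
| "subst s (Ml e1 e2) = Ml (subst s e1) (subst s e2)"

definition vs :: "nat \<Rightarrow> expr list" where "vs n = map V [0..<n]"

lemma length_vs[simp]: "length (vs n) = n" by (simp add: vs_def)
lemma nth_vs[simp]: "i < n \<Longrightarrow> vs n ! i = V i" by (simp add: vs_def)

fun interp :: "circ \<Rightarrow> expr list \<Rightarrow> expr list" where
  "interp (Gen Discard) es = []"
| "interp (Gen Copy) es = [es ! 0, es ! 0]"
| "interp (Gen Zero) es = [Zr]"
| "interp (Gen One) es = [On]"
| "interp (Gen Add) es = [Pl (es ! 0) (es ! 1)]"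
| "interp (Gen And) es = [Ml (es ! 0) (es ! 1)]"
| "interp (Id n) es = es"
| "interp Sym es = [es ! 1, es ! 0]"
| "interp (Seq f g) es = interp g (interp f es)"
| "interp (Par f g) es = interp f (take (cdom f) es) @ interp g (drop (cdom f) es)"

lemma cdom_ty: "ty c = Some (a, b) \<Longrightarrow> cdom c = a"
proof (induction c arbitrary: a b)
  case (Gen g) then show ?case by (cases g) auto
qed (auto split: option.splits if_splits)

lemma interp_len: "ty c = Some (a, b) \<Longrightarrow> length es = a \<Longrightarrow> length (interp c es) = b"
proof (induction c arbitrary: a b es)
  case (Gen g) then show ?case by (cases g) auto
next
  case (Par f g) then show ?case by (auto split: option.splits simp: cdom_ty)
qed (auto split: option.splits if_splits)

lemma interp_subst: "ty c = Some (a, b) \<Longrightarrow> length es = a \<Longrightarrow>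
   interp c (map (subst s) es) = map (subst s) (interp c es)"
proof (induction c arbitrary: a b es)
  case (Gen g) then show ?case by (cases g) (auto simp: numeral_eq_Suc)
next
  case Sym then show ?case by (auto simp: numeral_eq_Suc)
next
  case (Seq f g) then show ?case by (auto split: option.splits if_splits simp: interp_len)
next
  case (Par f g) then show ?case by (auto split: option.splits simp: cdom_ty take_map drop_map)
qed auto

lemma interp_vb: "ty c = Some (a, b) \<Longrightarrow> length es = a \<Longrightarrow> \<forall>e\<in>set es. vb n e \<Longrightarrow>
   \<forall>e\<in>set (interp c es). vb n e"
proof (induction c arbitrary: a b es)
  case (Gen g) then show ?case by (cases g) (auto simp: numeral_eq_Suc)
next
  case Sym then show ?case by (auto simp: numeral_eq_Suc)
next
  case (Seq f g)
  then obtain k where k: "ty f = Some (a, k)" "ty g = Some (k, b)" by (auto split: option.splits if_splits)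
  have 1: "\<forall>e\<in>set (interp f es). vb n e" using Seq.IH(1)[OF k(1)] Seq.prems(2,3) by blast
  have 2: "length (interp f es) = k" using interp_len[OF k(1)] Seq.prems(2) by blast
  show ?case using Seq.IH(2)[OF k(2) 2 1] by simp
next
  case (Par f g)
  obtain a1 b1 where k1: "ty f = Some (a1, b1)" using Par.prems(1) by (cases "ty f") auto
  obtain a2 b2 where k2: "ty g = Some (a2, b2)" using Par.prems(1) by (cases "ty g") (auto split: option.splits)
  have k: "ty f = Some (a1, b1)" "ty g = Some (a2, b2)" "a = a1 + a2" using k1 k2 Par.prems(1) by auto
  have 1: "\<forall>e\<in>set (interp f (take a1 es)). vb n e"
    using Par.IH(1)[OF k(1), of "take a1 es"] Par.prems k by (auto dest: in_set_takeD)
  have 2: "\<forall>e\<in>set (interp g (drop a1 es)). vb n e"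
    using Par.IH(2)[OF k(2), of "drop a1 es"] Par.prems k by (auto dest: in_set_dropD)
  show ?case using 1 2 k by (auto simp: cdom_ty)
qed auto

lemma subst_vs: "length s = k \<Longrightarrow> map (subst s) (vs k) = s"
  by (auto simp: vs_def intro: nth_equalityI)

lemma subst_vs_id: "vb a e \<Longrightarrow> subst (vs a) e = e"
  by (induction e) auto

lemma vb_subst: "vb k e \<Longrightarrow> length s = k \<Longrightarrow> \<forall>x\<in>set s. vb a x \<Longrightarrow> vb a (subst s e)"
  by (induction e) auto

lemma vb_vs: "\<forall>x\<in>set (vs a). vb a x" by (auto simp: vs_def)

section \<open>translation of expressions\<close>

definition proj :: "nat \<Rightarrow> nat \<Rightarrow> circ" where
  "proj n i = Par (discardn i) (Par (Id 1) (discardn (n - Suc i)))"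

definition bin :: "nat \<Rightarrow> gen \<Rightarrow> circ \<Rightarrow> circ \<Rightarrow> circ" where
  "bin a g t1 t2 = Seq (Seq (copyn a) (Par t1 t2)) (Gen g)"

fun tr :: "nat \<Rightarrow> expr \<Rightarrow> circ" where
  "tr a (V i) = proj a i"
| "tr a Zr = Seq (discardn a) (Gen Zero)"
| "tr a On = Seq (discardn a) (Gen One)"
| "tr a (Pl e1 e2) = bin a Add (tr a e1) (tr a e2)"
| "tr a (Ml e1 e2) = bin a And (tr a e1) (tr a e2)"

fun tup :: "nat \<Rightarrow> circ list \<Rightarrow> circ" where
  "tup a [] = discardn a"
| "tup a (t # ts) = Seq (copyn a) (Par t (tup a ts))"

lemma ty_proj[simp]: "i < n \<Longrightarrow> ty (proj n i) = Some (n, 1)"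
  by (simp add: proj_def)

lemma ty_bin[simp]: "ty t1 = Some (a, 1) \<Longrightarrow> ty t2 = Some (a, 1) \<Longrightarrow> gen_dom g = 2 \<Longrightarrow>
   ty (bin a g t1 t2) = Some (a, gen_cod g)"
  by (simp add: bin_def)

lemma ty_tr[simp]: "vb a e \<Longrightarrow> ty (tr a e) = Some (a, 1)"
  by (induction e) auto

lemma ty_tup[simp]: "\<forall>t\<in>set ts. ty t = Some (a, 1) \<Longrightarrow> ty (tup a ts) = Some (a, length ts)"
  by (induction ts) auto



lemma PSL: "ty f = Some (a, 0) \<Longrightarrow> ty g = Some (c, d) \<Longrightarrow> Par f g \<approx> Seq (Par f (Id c)) g"
proof -
  assume f: "ty f = Some (a, 0)" and g: "ty g = Some (c, d)"
  have "Par f g \<approx> Par (Seq f (Id 0)) (Seq (Id c) g)"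
    by (rule eqv.cong_par; rule eqv.sym) (rule E_idr, simp add: f, rule E_idl, simp add: g)
  also have "... \<approx> Seq (Par f (Id c)) (Par (Id 0) g)" by (rule E_xch') (simp add: f g)
  also have "... \<approx> Seq (Par f (Id c)) g" by (rule E_seqR, rule E_unitl) (simp add: g)
  finally show ?thesis .
qed

lemma PSR: "ty f = Some (a, b) \<Longrightarrow> ty g = Some (c, 0) \<Longrightarrow> Par f g \<approx> Seq (Par (Id a) g) f"
proof -
  assume f: "ty f = Some (a, b)" and g: "ty g = Some (c, 0)"
  have "Par f g \<approx> Par (Seq (Id a) f) (Seq g (Id 0))"
    by (rule eqv.cong_par; rule eqv.sym) (rule E_idl, simp add: f, rule E_idr, simp add: g)
  also have "... \<approx> Seq (Par (Id a) g) (Par f (Id 0))" by (rule E_xch') (simp add: f g)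
  also have "... \<approx> Seq (Par (Id a) g) f" by (rule E_seqR, rule E_unitr) (simp add: f)
  finally show ?thesis .
qed

lemma RCt: "ty t = Some (a, b) \<Longrightarrow> Seq (copyn a) (Par t (discardn a)) \<approx> t"
proof -
  assume t: "ty t = Some (a, b)"
  have "Seq (copyn a) (Par t (discardn a)) \<approx> Seq (copyn a) (Seq (Par (Id a) (discardn a)) t)"
    by (rule E_seqR, rule PSR[OF t]) simp
  also have "... \<approx> Seq (Seq (copyn a) (Par (Id a) (discardn a))) t" by (rule E_assoc') (simp add: t)
  also have "... \<approx> Seq (Id a) t" by (rule E_seqL, rule RC)
  also have "... \<approx> t" by (rule E_idl) (simp add: t)
  finally show ?thesis .
qed

lemma LCt: "ty t = Some (a, b) \<Longrightarrow> Seq (copyn a) (Par (discardn a) t) \<approx> t"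
proof -
  assume t: "ty t = Some (a, b)"
  have "Seq (copyn a) (Par (discardn a) t) \<approx> Seq (copyn a) (Seq (Par (discardn a) (Id a)) t)"
    by (rule E_seqR, rule PSL[OF _ t]) simp
  also have "... \<approx> Seq (Seq (copyn a) (Par (discardn a) (Id a))) t" by (rule E_assoc') (simp add: t)
  also have "... \<approx> Seq (Id a) t" by (rule E_seqL, rule LC)
  also have "... \<approx> t" by (rule E_idl) (simp add: t)
  finally show ?thesis .
qed

lemma PJ1: "j < b \<Longrightarrow> proj (b + d) j \<approx> Par (proj b j) (discardn d)"
proof -
  assume j: "j < b"
  have e: "b + d - Suc j = (b - Suc j) + d" using j by simp
  have "proj (b + d) j = Par (discardn j) (Par (Id 1) (discardn ((b - Suc j) + d)))"
    by (simp add: proj_def e)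
  also have "... \<approx> Par (discardn j) (Par (Id 1) (Par (discardn (b - Suc j)) (discardn d)))"
    by (rule E_parR, rule E_parR, rule L_disc_add)
  also have "... \<approx> Par (discardn j) (Par (Par (Id 1) (discardn (b - Suc j))) (discardn d))"
    by (rule E_parR, rule E_passoc') simp
  also have "... \<approx> Par (Par (discardn j) (Par (Id 1) (discardn (b - Suc j)))) (discardn d)"
    by (rule E_passoc') simp
  finally show ?thesis by (simp add: proj_def)
qed

lemma PJ2: "b \<le> j \<Longrightarrow> j < b + d \<Longrightarrow> proj (b + d) j \<approx> Par (discardn b) (proj d (j - b))"
proof -
  assume j: "b \<le> j" "j < b + d"
  then obtain i where i: "j = b + i" "i < d" by (metis add_less_cancel_left le_Suc_ex)
  have "proj (b + d) j = Par (discardn (b + i)) (Par (Id 1) (discardn (d - Suc i)))"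
    by (simp add: proj_def i)
  also have "... \<approx> Par (Par (discardn b) (discardn i)) (Par (Id 1) (discardn (d - Suc i)))"
    by (rule E_parL, rule L_disc_add)
  also have "... \<approx> Par (discardn b) (Par (discardn i) (Par (Id 1) (discardn (d - Suc i))))"
    by (rule E_passoc) simp
  finally show ?thesis by (simp add: proj_def i)
qed

lemma PR0: "proj (Suc n) 0 \<approx> Par (Id 1) (discardn n)"
  by (simp add: proj_def) (rule E_unitl, simp)

lemma D1: "discardn 1 \<approx> Disc"
  by (simp add: numeral_eq_Suc) (rule E_unitr, simp)

lemma PR_id: "proj 1 0 \<approx> Id 1"
proof -
  have "proj 1 0 \<approx> Par (Id 1) (discardn 0)" using PR0[of 0] by simp
  also have "... \<approx> Id 1" by simp (rule E_unitr, simp)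
  finally show ?thesis .
qed

lemma BN: "ty f = Some (a, k) \<Longrightarrow> ty t1 = Some (k, 1) \<Longrightarrow> ty t2 = Some (k, 1) \<Longrightarrow> gen_dom g = 2 \<Longrightarrow>
  Seq f (bin k g t1 t2) \<approx> bin a g (Seq f t1) (Seq f t2)"
proof -
  assume f: "ty f = Some (a, k)" and t: "ty t1 = Some (k, 1)" "ty t2 = Some (k, 1)" and g: "gen_dom g = 2"
  have "Seq f (bin k g t1 t2) = Seq f (Seq (Seq (copyn k) (Par t1 t2)) (Gen g))" by (simp add: bin_def)
  also have "... \<approx> Seq (Seq f (Seq (copyn k) (Par t1 t2))) (Gen g)"
    by (rule E_assoc') (simp add: f t g)
  also have "... \<approx> Seq (Seq (Seq f (copyn k)) (Par t1 t2)) (Gen g)"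
    by (rule E_seqL, rule E_assoc') (simp add: f t g)
  also have "... \<approx> Seq (Seq (Seq (copyn a) (Par f f)) (Par t1 t2)) (Gen g)"
    by (rule E_seqL, rule E_seqL, rule E_copynat[OF f])
  also have "... \<approx> Seq (Seq (copyn a) (Seq (Par f f) (Par t1 t2))) (Gen g)"
    by (rule E_seqL, rule E_assoc) (simp add: f t g)
  also have "... \<approx> Seq (Seq (copyn a) (Par (Seq f t1) (Seq f t2))) (Gen g)"
    by (rule E_seqL, rule E_seqR, rule E_xch) (simp add: f t g)
  finally show ?thesis by (simp add: bin_def)
qed

lemma BNcong: "t1 \<approx> t1' \<Longrightarrow> t2 \<approx> t2' \<Longrightarrow> bin a g t1 t2 \<approx> bin a g t1' t2'"
  unfolding bin_def by (intro E_seqL E_seqR eqv.cong_par)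

lemma S: "ty f = Some (a, k) \<Longrightarrow> length es = k \<Longrightarrow> (\<forall>j<k. Seq f (proj k j) \<approx> tr a (es ! j)) \<Longrightarrow>
  vb k e \<Longrightarrow> Seq f (tr k e) \<approx> tr a (subst es e)"
proof (induction e)
  case (V i) then show ?case by simp
next
  case Zr
  have "Seq f (Seq (discardn k) (Gen Zero)) \<approx> Seq (Seq f (discardn k)) (Gen Zero)"
    by (rule E_assoc') (simp add: Zr)
  also have "... \<approx> Seq (discardn a) (Gen Zero)" by (rule E_seqL, rule E_discnat, rule Zr)
  finally show ?case by simp
next
  case On
  have "Seq f (Seq (discardn k) (Gen One)) \<approx> Seq (Seq f (discardn k)) (Gen One)"
    by (rule E_assoc') (simp add: On)
  also have "... \<approx> Seq (discardn a) (Gen One)" by (rule E_seqL, rule E_discnat, rule On)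
  finally show ?case by simp
next
  case (Pl e1 e2)
  have "Seq f (tr k (Pl e1 e2)) \<approx> bin a Add (Seq f (tr k e1)) (Seq f (tr k e2))"
    using Pl.prems by simp (rule BN, simp_all)
  also have "... \<approx> tr a (subst es (Pl e1 e2))"
    using Pl by simp (rule BNcong, simp_all)
  finally show ?case .
next
  case (Ml e1 e2)
  have "Seq f (tr k (Ml e1 e2)) \<approx> bin a And (Seq f (tr k e1)) (Seq f (tr k e2))"
    using Ml.prems by simp (rule BN, simp_all)
  also have "... \<approx> tr a (subst es (Ml e1 e2))"
    using Ml by simp (rule BNcong, simp_all)
  finally show ?case .
qed

lemma NAT: "ty c = Some (a, b) \<Longrightarrow> \<forall>t\<in>set ts. ty t = Some (b, 1) \<Longrightarrow>
  Seq c (tup b ts) \<approx> tup a (map (Seq c) ts)"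
proof (induction ts)
  case Nil then show ?case by (simp add: E_discnat)
next
  case (Cons t ts)
  have "Seq c (tup b (t # ts)) = Seq c (Seq (copyn b) (Par t (tup b ts)))" by simp
  also have "... \<approx> Seq (Seq c (copyn b)) (Par t (tup b ts))" by (rule E_assoc') (simp add: Cons.prems)
  also have "... \<approx> Seq (Seq (copyn a) (Par c c)) (Par t (tup b ts))"
    by (rule E_seqL, rule E_copynat, rule Cons.prems)
  also have "... \<approx> Seq (copyn a) (Seq (Par c c) (Par t (tup b ts)))"
    by (rule E_assoc) (simp add: Cons.prems)
  also have "... \<approx> Seq (copyn a) (Par (Seq c t) (Seq c (tup b ts)))"
    by (rule E_seqR, rule E_xch) (simp add: Cons.prems)
  also have "... \<approx> Seq (copyn a) (Par (Seq c t) (tup a (map (Seq c) ts)))"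
    using Cons by (intro E_seqR E_parR) simp
  finally show ?case by simp
qed

lemma TUPcong: "list_all2 eqv ts ts' \<Longrightarrow> tup a ts \<approx> tup a ts'"
  by (induction ts ts' rule: list_all2_induct) (auto intro: eqv.refl E_seqR eqv.cong_par)

lemma TP: "\<forall>t\<in>set ts. ty t = Some (a, 1) \<Longrightarrow> j < length ts \<Longrightarrow>
  Seq (tup a ts) (proj (length ts) j) \<approx> ts ! j"
proof (induction ts arbitrary: j)
  case Nil then show ?case by simp
next
  case (Cons t ts)
  let ?n = "length ts"
  have t: "ty t = Some (a, 1)" and T: "ty (tup a ts) = Some (a, ?n)" using Cons.prems by auto
  show ?case
  proof (cases j)
    case 0
    have "Seq (tup a (t # ts)) (proj (Suc ?n) 0) \<approx> Seq (tup a (t # ts)) (Par (Id 1) (discardn ?n))"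
      by (rule E_seqR, rule PR0)
    also have "... = Seq (Seq (copyn a) (Par t (tup a ts))) (Par (Id 1) (discardn ?n))" by simp
    also have "... \<approx> Seq (copyn a) (Seq (Par t (tup a ts)) (Par (Id 1) (discardn ?n)))"
      by (rule E_assoc) (simp add: t T)
    also have "... \<approx> Seq (copyn a) (Par (Seq t (Id 1)) (Seq (tup a ts) (discardn ?n)))"
      by (rule E_seqR, rule E_xch) (simp add: t T)
    also have "... \<approx> Seq (copyn a) (Par t (discardn a))"
      by (rule E_seqR, rule eqv.cong_par, rule E_idr, simp add: t, rule E_discnat[OF T])
    also have "... \<approx> t" by (rule RCt[OF t])
    finally show ?thesis using 0 by simp
  next
    case (Suc i)
    have i: "i < ?n" using Cons.prems Suc by simp
    have "Seq (tup a (t # ts)) (proj (1 + ?n) j) \<approx> Seq (tup a (t # ts)) (Par (discardn 1) (proj ?n i))"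
      by (rule E_seqR) (use PJ2[of 1 j ?n] Suc i in simp)
    also have "... = Seq (Seq (copyn a) (Par t (tup a ts))) (Par (discardn 1) (proj ?n i))" by simp
    also have "... \<approx> Seq (copyn a) (Seq (Par t (tup a ts)) (Par (discardn 1) (proj ?n i)))"
      by (rule E_assoc) (simp add: t T i)
    also have "... \<approx> Seq (copyn a) (Par (Seq t (discardn 1)) (Seq (tup a ts) (proj ?n i)))"
      by (rule E_seqR, rule E_xch) (simp add: t T i)
    also have "... \<approx> Seq (copyn a) (Par (discardn a) (ts ! i))"
      by (rule E_seqR, rule eqv.cong_par, rule E_discnat[OF t], rule Cons.IH) (use Cons.prems i in auto)
    also have "... \<approx> ts ! i" by (rule LCt) (use Cons.prems i in auto)
    finally show ?thesis using Suc by simp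
  qed
qed



lemma MIX: "Seq (copyn (Suc n)) (Par (Par (Id 1) (discardn n)) (Par (discardn 1) (Id n))) \<approx> Id (Suc n)"
proof -
  let ?D = "discardn n"
  have "Par (Par (Id 1) ?D) (Par (discardn 1) (Id n)) \<approx> Par (Id 1) (Par ?D (Par (discardn 1) (Id n)))"
    by (rule E_passoc) simp
  also have "... \<approx> Par (Id 1) (Par (Par ?D (discardn 1)) (Id n))"
    by (rule E_parR, rule E_passoc') simp
  finally have 1: "Par (Par (Id 1) ?D) (Par (discardn 1) (Id n)) \<approx> Par (Id 1) (Par (Par ?D (discardn 1)) (Id n))" .
  have 3: "Seq (braid n) (Par ?D (discardn 1)) \<approx> discardn (Suc n)"
  proof -
    have "Seq (braid n) (Par ?D (discardn 1)) \<approx> Seq (braid n) (discardn (n + 1))"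
      by (rule E_seqR, rule eqv.sym, rule L_disc_add)
    also have "... \<approx> discardn (Suc n)" using E_discnat[of "braid n" "Suc n" "Suc n"] by simp
    finally show ?thesis .
  qed
  have "Seq (Par (Id 1) (Par (braid n) (Id n))) (Par (Par (Id 1) ?D) (Par (discardn 1) (Id n)))
    \<approx> Seq (Par (Id 1) (Par (braid n) (Id n))) (Par (Id 1) (Par (Par ?D (discardn 1)) (Id n)))"
    by (rule E_seqR, rule 1)
  also have "... \<approx> Par (Seq (Id 1) (Id 1)) (Seq (Par (braid n) (Id n)) (Par (Par ?D (discardn 1)) (Id n)))"
    by (rule E_xch) simp
  also have "... \<approx> Par (Seq (Id 1) (Id 1)) (Par (Seq (braid n) (Par ?D (discardn 1))) (Seq (Id n) (Id n)))"
    by (rule E_parR, rule E_xch) simp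
  also have "... \<approx> Par (Id 1) (Par (discardn (Suc n)) (Id n))"
    by (rule eqv.cong_par, rule E_idl, simp, rule eqv.cong_par, rule 3, rule E_idl, simp)
  also have "... = Par (Id 1) (Par (Par Disc ?D) (Id n))" by simp
  also have "... \<approx> Par (Id 1) (Par Disc (Par ?D (Id n)))"
    by (rule E_parR, rule E_passoc) simp
  also have "... \<approx> Par (Par (Id 1) Disc) (Par ?D (Id n))"
    by (rule E_passoc') simp
  finally have 2: "Seq (Par (Id 1) (Par (braid n) (Id n))) (Par (Par (Id 1) ?D) (Par (discardn 1) (Id n)))
    \<approx> Par (Par (Id 1) Disc) (Par ?D (Id n))" .
  have "Seq (copyn (Suc n)) (Par (Par (Id 1) ?D) (Par (discardn 1) (Id n)))
    = Seq (Seq (Par Cpy (copyn n)) (Par (Id 1) (Par (braid n) (Id n)))) (Par (Par (Id 1) ?D) (Par (discardn 1) (Id n)))"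
    by simp
  also have "... \<approx> Seq (Par Cpy (copyn n)) (Seq (Par (Id 1) (Par (braid n) (Id n))) (Par (Par (Id 1) ?D) (Par (discardn 1) (Id n))))"
    by (rule E_assoc) simp
  also have "... \<approx> Seq (Par Cpy (copyn n)) (Par (Par (Id 1) Disc) (Par ?D (Id n)))"
    by (rule E_seqR, rule 2)
  also have "... \<approx> Par (Seq Cpy (Par (Id 1) Disc)) (Seq (copyn n) (Par ?D (Id n)))"
    by (rule E_xch) simp
  also have "... \<approx> Par (Id 1) (Id n)"
    by (rule eqv.cong_par, rule CU2, rule LC)
  also have "... \<approx> Id (Suc n)" by (rule par_id') simp
  finally show ?thesis .
qed

lemma map_proj_Suc: "map (proj (Suc n)) [0..<Suc n] = proj (Suc n) 0 # map (\<lambda>j. proj (Suc n) (Suc j)) [0..<n]"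
  by (simp add: upt_conv_Cons map_Suc_upt[symmetric] del: upt_Suc)

lemma ID: "tup n (map (proj n) [0..<n]) \<approx> Id n"
proof (induction n)
  case 0 then show ?case by (simp add: E_refl)
next
  case (Suc n)
  let ?DD = "Par (discardn 1) (Id n)"
  let ?ps = "map (proj n) [0..<n]"
  have r: "list_all2 eqv (map (\<lambda>j. proj (Suc n) (Suc j)) [0..<n]) (map (Seq ?DD) ?ps)"
  proof (rule list_all2_all_nthI)
    fix j assume "j < length (map (\<lambda>j. proj (Suc n) (Suc j)) [0..<n])"
    then have j: "j < n" by simp
    have "proj (Suc n) (Suc j) \<approx> Par (discardn 1) (proj n j)"
      using PJ2[of 1 "Suc j" n] j by simp
    also have "... \<approx> Seq ?DD (proj n j)" by (rule PSL) (simp_all add: j)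
    finally show "map (\<lambda>j. proj (Suc n) (Suc j)) [0..<n] ! j \<approx> map (Seq ?DD) ?ps ! j"
      using j by simp
  qed simp
  have "tup (Suc n) (map (\<lambda>j. proj (Suc n) (Suc j)) [0..<n]) \<approx> tup (Suc n) (map (Seq ?DD) ?ps)"
    by (rule TUPcong[OF r])
  also have "... \<approx> Seq ?DD (tup n ?ps)"
    by (rule eqv.sym, rule NAT) auto
  also have "... \<approx> Seq ?DD (Id n)" by (rule E_seqR, rule Suc)
  also have "... \<approx> ?DD" by (rule E_idr) simp
  finally have 1: "tup (Suc n) (map (\<lambda>j. proj (Suc n) (Suc j)) [0..<n]) \<approx> ?DD" .
  have "tup (Suc n) (map (proj (Suc n)) [0..<Suc n])
     = Seq (copyn (Suc n)) (Par (proj (Suc n) 0) (tup (Suc n) (map (\<lambda>j. proj (Suc n) (Suc j)) [0..<n])))"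
    by (simp only: map_proj_Suc tup.simps)
  also have "... \<approx> Seq (copyn (Suc n)) (Par (Par (Id 1) (discardn n)) ?DD)"
    by (rule E_seqR, rule eqv.cong_par, rule PR0, rule 1)
  also have "... \<approx> Id (Suc n)" by (rule MIX)
  finally show ?case .
qed

lemma W1: "vb a1 e \<Longrightarrow> Par (tr a1 e) (discardn a2) \<approx> tr (a1 + a2) e"
proof -
  assume e: "vb a1 e"
  let ?f = "Par (Id a1) (discardn a2)"
  have h: "\<forall>j<a1. Seq ?f (proj a1 j) \<approx> tr (a1 + a2) (vs a1 ! j)"
  proof (intro allI impI)
    fix j assume j: "j < a1"
    have "Seq ?f (proj a1 j) \<approx> Seq ?f (Par (proj a1 j) (Id 0))"
      by (rule E_seqR, rule eqv.sym, rule E_unitr) (simp add: j)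
    also have "... \<approx> Par (Seq (Id a1) (proj a1 j)) (Seq (discardn a2) (Id 0))"
      by (rule E_xch) (simp add: j)
    also have "... \<approx> Par (proj a1 j) (discardn a2)"
      by (rule eqv.cong_par, rule E_idl, simp add: j, rule E_idr, simp)
    also have "... \<approx> proj (a1 + a2) j" by (rule eqv.sym, rule PJ1[OF j])
    finally show "Seq ?f (proj a1 j) \<approx> tr (a1 + a2) (vs a1 ! j)" using j by simp
  qed
  have "Par (tr a1 e) (discardn a2) \<approx> Seq ?f (tr a1 e)" by (rule PSR) (simp_all add: e)
  also have "... \<approx> tr (a1 + a2) (subst (vs a1) e)" by (rule S[OF _ _ h e]) simp_all
  finally show ?thesis by (simp add: subst_vs_id[OF e])
qed

lemma drop_vs: "j < a2 \<Longrightarrow> drop a1 (vs (a1 + a2)) ! j = V (a1 + j)"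
  by (simp add: vs_def)

lemma W2: "vb a2 e \<Longrightarrow> Par (discardn a1) (tr a2 e) \<approx> tr (a1 + a2) (subst (drop a1 (vs (a1 + a2))) e)"
proof -
  assume e: "vb a2 e"
  let ?f = "Par (discardn a1) (Id a2)"
  have h: "\<forall>j<a2. Seq ?f (proj a2 j) \<approx> tr (a1 + a2) (drop a1 (vs (a1 + a2)) ! j)"
  proof (intro allI impI)
    fix j assume j: "j < a2"
    have "Seq ?f (proj a2 j) \<approx> Par (discardn a1) (proj a2 j)"
      by (rule eqv.sym, rule PSL) (simp_all add: j)
    also have "... \<approx> proj (a1 + a2) (a1 + j)" by (rule eqv.sym) (use PJ2[of a1 "a1 + j" a2] j in simp)
    finally show "Seq ?f (proj a2 j) \<approx> tr (a1 + a2) (drop a1 (vs (a1 + a2)) ! j)"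
      using j by (simp add: drop_vs)
  qed
  have "Par (discardn a1) (tr a2 e) \<approx> Seq ?f (tr a2 e)" by (rule PSL) (simp_all add: e)
  also have "... \<approx> tr (a1 + a2) (subst (drop a1 (vs (a1 + a2))) e)" by (rule S[OF _ _ h e]) simp_all
  finally show ?thesis .
qed



lemma P20: "proj 2 0 \<approx> Par (Id 1) Disc"
proof -
  have "proj 2 0 \<approx> Par (Id 1) (discardn 1)" using PR0[of 1] by (simp add: numeral_eq_Suc)
  also have "... \<approx> Par (Id 1) Disc" by (rule E_parR, rule D1)
  finally show ?thesis .
qed

lemma P21: "proj 2 1 \<approx> Par Disc (Id 1)"
proof -
  have "proj 2 1 \<approx> Par (discardn 1) (proj 1 0)" using PJ2[of 1 1 1] by (simp add: numeral_eq_Suc)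
  also have "... \<approx> Par Disc (Id 1)" by (rule eqv.cong_par, rule D1, rule PR_id)
  finally show ?thesis .
qed

lemma CP2: "Seq (copyn 2) (Par (proj 2 0) (proj 2 1)) \<approx> Id 2"
proof -
  have m: "map (proj 2) [0..<2] = [proj 2 0, proj 2 1]" by (simp add: numeral_eq_Suc)
  have "Seq (copyn 2) (Par (proj 2 0) (proj 2 1)) \<approx> Seq (copyn 2) (Par (proj 2 0) (Seq (copyn 2) (Par (proj 2 1) (discardn 2))))"
    by (rule E_seqR, rule E_parR, rule eqv.sym, rule RCt) simp
  also have "... = tup 2 (map (proj 2) [0..<2])" by (simp add: m)
  also have "... \<approx> Id 2" by (rule ID)
  finally show ?thesis .
qed

lemma P_bin: "gen_dom g = 2 \<Longrightarrow> gen_cod g = 1 \<Longrightarrow> Seq (Gen g) (proj 1 0) \<approx> bin 2 g (proj 2 0) (proj 2 1)"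
proof -
  assume g: "gen_dom g = 2" "gen_cod g = 1"
  have "Seq (Gen g) (proj 1 0) \<approx> Seq (Gen g) (Id 1)" by (rule E_seqR, rule PR_id)
  also have "... \<approx> Gen g" by (rule E_idr) (simp add: g)
  also have "... \<approx> Seq (Id 2) (Gen g)" by (rule eqv.sym, rule E_idl) (simp add: g)
  also have "... \<approx> Seq (Seq (copyn 2) (Par (proj 2 0) (proj 2 1))) (Gen g)"
    by (rule E_seqL, rule eqv.sym, rule CP2)
  finally show ?thesis by (simp add: bin_def)
qed

lemma P_const: "gen_dom g = 0 \<Longrightarrow> gen_cod g = 1 \<Longrightarrow> Seq (Gen g) (proj 1 0) \<approx> Seq (discardn 0) (Gen g)"
proof -
  assume g: "gen_dom g = 0" "gen_cod g = 1"
  have "Seq (Gen g) (proj 1 0) \<approx> Seq (Gen g) (Id 1)" by (rule E_seqR, rule PR_id)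
  also have "... \<approx> Gen g" by (rule E_idr) (simp add: g)
  also have "... \<approx> Seq (Id 0) (Gen g)" by (rule eqv.sym, rule E_idl) (simp add: g)
  finally show ?thesis by simp
qed

lemma P_copy0: "Seq Cpy (proj 2 0) \<approx> proj 1 0"
proof -
  have "Seq Cpy (proj 2 0) \<approx> Seq Cpy (Par (Id 1) Disc)" by (rule E_seqR, rule P20)
  also have "... \<approx> Id 1" by (rule CU2)
  also have "... \<approx> proj 1 0" by (rule eqv.sym, rule PR_id)
  finally show ?thesis .
qed

lemma P_copy1: "Seq Cpy (proj 2 1) \<approx> proj 1 0"
proof -
  have "Seq Cpy (proj 2 1) \<approx> Seq Cpy (Par Disc (Id 1))" by (rule E_seqR, rule P21)
  also have "... \<approx> Id 1" by (rule CU1)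
  also have "... \<approx> proj 1 0" by (rule eqv.sym, rule PR_id)
  finally show ?thesis .
qed

lemma P_sym0: "Seq Sym (proj 2 0) \<approx> proj 2 1"
proof -
  have "Seq Sym (proj 2 0) \<approx> Seq (braid 1) (Par (Id 1) Disc)"
    by (rule eqv.cong_seq, rule eqv.sym, rule BR1, rule P20)
  also have "... \<approx> Par Disc (Id 1)" by (rule BRd2)
  also have "... \<approx> proj 2 1" by (rule eqv.sym, rule P21)
  finally show ?thesis .
qed

lemma P_sym1: "Seq Sym (proj 2 1) \<approx> proj 2 0"
proof -
  have "Seq Sym (proj 2 1) \<approx> Seq (braid 1) (Par (discardn 1) (Id 1))"
    by (rule eqv.cong_seq, rule eqv.sym, rule BR1, rule eqv.trans, rule P21, rule E_parL, rule eqv.sym, rule D1)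
  also have "... \<approx> Par (Id 1) (discardn 1)" by (rule BRd1)
  also have "... \<approx> proj 2 0" by (rule eqv.trans, rule E_parR, rule D1, rule eqv.sym, rule P20)
  finally show ?thesis .
qed

lemma P: "ty c = Some (a, b) \<Longrightarrow> j < b \<Longrightarrow> Seq c (proj b j) \<approx> tr a (interp c (vs a) ! j)"
proof (induction c arbitrary: a b j)
  case (Gen g)
  show ?case
  proof (cases g)
    case Discard then show ?thesis using Gen by simp
  next
    case Copy
    then have ab: "a = 1" "b = 2" using Gen by auto
    then have j: "j = 0 \<or> j = 1" using Gen by auto
    then show ?thesis using Copy ab P_copy0 P_copy1 by (auto simp: numeral_eq_Suc)
  next
    case Zero
    then show ?thesis using Gen P_const[of Zero] by auto
  next
    case One
    then show ?thesis using Gen P_const[of One] by auto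
  next
    case Add
    then show ?thesis using Gen P_bin[of Add] by auto
  next
    case And
    then show ?thesis using Gen P_bin[of And] by auto
  qed
next
  case (Id n)
  then have "a = n" "b = n" by auto
  then show ?case using Id by simp (rule E_idl, simp)
next
  case Sym
  then have j: "j = 0 \<or> j = 1" by auto
  then show ?case using Sym P_sym0 P_sym1 by (auto simp: numeral_eq_Suc)
next
  case (Seq f g)
  obtain k where f: "ty f = Some (a, k)" and g: "ty g = Some (k, b)"
    using Seq.prems(1) by (auto split: option.splits if_splits)
  let ?es = "interp f (vs a)"
  have les: "length ?es = k" using interp_len[OF f] by simp
  have vbg: "vb k (interp g (vs k) ! j)"
    using interp_vb[OF g, of "vs k" k] vb_vs Seq.prems(2) interp_len[OF g, of "vs k"] by auto
  have "Seq (Seq f g) (proj b j) \<approx> Seq f (Seq g (proj b j))"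
    by (rule E_assoc) (simp add: f g Seq.prems)
  also have "... \<approx> Seq f (tr k (interp g (vs k) ! j))"
    by (rule E_seqR, rule Seq.IH(2)[OF g Seq.prems(2)])
  also have "... \<approx> tr a (subst ?es (interp g (vs k) ! j))"
    by (rule S[OF f les _ vbg]) (use Seq.IH(1)[OF f] in auto)
  also have "subst ?es (interp g (vs k) ! j) = interp (Seq f g) (vs a) ! j"
  proof -
    have "interp (Seq f g) (vs a) = interp g (map (subst ?es) (vs k))"
      by (simp add: subst_vs[OF les])
    also have "... = map (subst ?es) (interp g (vs k))" by (rule interp_subst[OF g]) simp
    finally show ?thesis using interp_len[OF g, of "vs k"] Seq.prems(2) by simp
  qed
  finally show ?case .
next
  case (Par f g)
  obtain a1 b1 where k1: "ty f = Some (a1, b1)" using Par.prems(1) by (cases "ty f") auto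
  obtain a2 b2 where k2: "ty g = Some (a2, b2)" using Par.prems(1) by (cases "ty g") (auto split: option.splits)
  have ab: "a = a1 + a2" "b = b1 + b2" using k1 k2 Par.prems(1) by auto
  let ?s = "drop a1 (vs (a1 + a2))"
  have ls: "length ?s = a2" by simp
  have tk: "take a1 (vs (a1 + a2)) = vs a1" by (simp add: vs_def take_map)
  have ig: "interp g ?s = map (subst ?s) (interp g (vs a2))"
    using interp_subst[OF k2, of "vs a2" ?s] subst_vs[OF ls] by simp
  have int: "interp (Par f g) (vs a) = interp f (vs a1) @ map (subst ?s) (interp g (vs a2))"
    using ab tk ig by (simp add: cdom_ty[OF k1])
  have lf: "length (interp f (vs a1)) = b1" using interp_len[OF k1] by simp
  have lg: "length (interp g (vs a2)) = b2" using interp_len[OF k2] by simp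
  show ?case
  proof (cases "j < b1")
    case True
    let ?e = "interp f (vs a1) ! j"
    have vbe: "vb a1 ?e" using interp_vb[OF k1, of "vs a1" a1] vb_vs True lf by auto
    have "Seq (Par f g) (proj b j) \<approx> Seq (Par f g) (Par (proj b1 j) (discardn b2))"
      unfolding ab by (rule E_seqR, rule PJ1[OF True])
    also have "... \<approx> Par (Seq f (proj b1 j)) (Seq g (discardn b2))"
      by (rule E_xch) (simp add: k1 k2 True)
    also have "... \<approx> Par (tr a1 ?e) (discardn a2)"
      by (rule eqv.cong_par, rule Par.IH(1)[OF k1 True], rule E_discnat[OF k2])
    also have "... \<approx> tr (a1 + a2) ?e" by (rule W1[OF vbe])
    finally show ?thesis using int ab True lf by (simp add: nth_append)
  next
    case False
    let ?i = "j - b1"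
    have i: "?i < b2" using False Par.prems(2) ab by simp
    let ?e = "interp g (vs a2) ! ?i"
    have vbe: "vb a2 ?e" using interp_vb[OF k2, of "vs a2" a2] vb_vs i lg by auto
    have "Seq (Par f g) (proj b j) \<approx> Seq (Par f g) (Par (discardn b1) (proj b2 ?i))"
      unfolding ab by (rule E_seqR, rule PJ2) (use False Par.prems(2) ab in auto)
    also have "... \<approx> Par (Seq f (discardn b1)) (Seq g (proj b2 ?i))"
      by (rule E_xch) (simp add: k1 k2 i)
    also have "... \<approx> Par (discardn a1) (tr a2 ?e)"
      by (rule eqv.cong_par, rule E_discnat[OF k1], rule Par.IH(2)[OF k2 i])
    also have "... \<approx> tr (a1 + a2) (subst ?s ?e)" by (rule W2[OF vbe])
    finally show ?thesis using int ab False lf lg i by (simp add: nth_append)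
  qed
qed



lemma T: "ty c = Some (a, b) \<Longrightarrow> c \<approx> tup a (map (\<lambda>j. tr a (interp c (vs a) ! j)) [0..<b])"
proof -
  assume c: "ty c = Some (a, b)"
  have "c \<approx> Seq c (Id b)" by (rule eqv.sym, rule E_idr) (simp add: c)
  also have "... \<approx> Seq c (tup b (map (proj b) [0..<b]))" by (rule E_seqR, rule eqv.sym, rule ID)
  also have "... \<approx> tup a (map (Seq c) (map (proj b) [0..<b]))" by (rule NAT[OF c]) auto
  also have "... \<approx> tup a (map (\<lambda>j. tr a (interp c (vs a) ! j)) [0..<b])"
    by (rule TUPcong) (auto simp: list_all2_conv_all_nth intro: P[OF c])
  finally show ?thesis .
qed

lemma EV: "ty l = Some (k, 1) \<Longrightarrow> length es = k \<Longrightarrow> \<forall>e\<in>set es. vb a e \<Longrightarrow>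
  Seq (tup a (map (tr a) es)) l \<approx> tr a (subst es (interp l (vs k) ! 0))"
proof -
  assume l: "ty l = Some (k, 1)" and les: "length es = k" and vbs: "\<forall>e\<in>set es. vb a e"
  let ?F = "tup a (map (tr a) es)"
  have F: "ty ?F = Some (a, k)" using vbs les by simp
  have vbl: "vb k (interp l (vs k) ! 0)"
    using interp_vb[OF l, of "vs k" k] vb_vs interp_len[OF l, of "vs k"] by auto
  have "Seq ?F l \<approx> Seq ?F (Seq l (proj 1 0))"
  proof (rule E_seqR, rule eqv.sym)
    have "Seq l (proj 1 0) \<approx> Seq l (Id 1)" by (rule E_seqR, rule PR_id)
    also have "... \<approx> l" by (rule E_idr) (simp add: l)
    finally show "Seq l (proj 1 0) \<approx> l" .
  qed
  also have "... \<approx> Seq ?F (tr k (interp l (vs k) ! 0))" by (rule E_seqR, rule P[OF l]) simp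
  also have "... \<approx> tr a (subst es (interp l (vs k) ! 0))"
  proof (rule S[OF F les _ vbl], intro allI impI)
    fix j assume j: "j < k"
    have "Seq ?F (proj (length (map (tr a) es)) j) \<approx> map (tr a) es ! j"
      by (rule TP) (use vbs les j in auto)
    then show "Seq ?F (proj k j) \<approx> tr a (es ! j)" using les j by simp
  qed
  finally show ?thesis .
qed

lemma AX: "ty l = Some (k, 1) \<Longrightarrow> ty r = Some (k, 1) \<Longrightarrow> l \<approx> r \<Longrightarrow> length es = k \<Longrightarrow>
  \<forall>e\<in>set es. vb a e \<Longrightarrow>
  tr a (subst es (interp l (vs k) ! 0)) \<approx> tr a (subst es (interp r (vs k) ! 0))"
proof -
  assume l: "ty l = Some (k, 1)" and r: "ty r = Some (k, 1)" and lr: "l \<approx> r" and les: "length es = k"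
    and vbs: "\<forall>e\<in>set es. vb a e"
  have "tr a (subst es (interp l (vs k) ! 0)) \<approx> Seq (tup a (map (tr a) es)) l"
    by (rule eqv.sym, rule EV[OF l les vbs])
  also have "... \<approx> Seq (tup a (map (tr a) es)) r" by (rule E_seqR, rule lr)
  also have "... \<approx> tr a (subst es (interp r (vs k) ! 0))" by (rule EV[OF r les vbs])
  finally show ?thesis .
qed

abbreviation RR :: "nat \<Rightarrow> expr \<Rightarrow> expr \<Rightarrow> bool" where "RR a e e' \<equiv> tr a e \<approx> tr a e'"

lemma vs2: "vs 2 = [V 0, V 1]" by (simp add: vs_def numeral_eq_Suc)
lemma vs3: "vs 3 = [V 0, V 1, V 2]" by (simp add: vs_def numeral_eq_Suc)
lemma vs1: "vs 1 = [V 0]" by (simp add: vs_def)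

lemma R_plcomm: "vb a e1 \<Longrightarrow> vb a e2 \<Longrightarrow> RR a (Pl e2 e1) (Pl e1 e2)"
  using AX[of "Seq Sym (Gen Add)" 2 "Gen Add" "[e1, e2]" a] eqv.add_comm by (simp add: vs2)

lemma R_plassoc: "vb a e1 \<Longrightarrow> vb a e2 \<Longrightarrow> vb a e3 \<Longrightarrow> RR a (Pl (Pl e1 e2) e3) (Pl e1 (Pl e2 e3))"
  using AX[of "Seq (Par (Gen Add) (Id 1)) (Gen Add)" 3 "Seq (Par (Id 1) (Gen Add)) (Gen Add)" "[e1, e2, e3]" a]
    eqv.add_assoc by (simp add: vs3)

lemma R_plunit: "vb a e \<Longrightarrow> RR a (Pl Zr e) e"
  using AX[of "Seq (Par (Gen Zero) (Id 1)) (Gen Add)" 1 "Id 1" "[e]" a] eqv.add_unit by (simp add: vs1)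

lemma R_mlcomm: "vb a e1 \<Longrightarrow> vb a e2 \<Longrightarrow> RR a (Ml e2 e1) (Ml e1 e2)"
  using AX[of "Seq Sym (Gen And)" 2 "Gen And" "[e1, e2]" a] eqv.and_comm by (simp add: vs2)

lemma R_mlassoc: "vb a e1 \<Longrightarrow> vb a e2 \<Longrightarrow> vb a e3 \<Longrightarrow> RR a (Ml (Ml e1 e2) e3) (Ml e1 (Ml e2 e3))"
  using AX[of "Seq (Par (Gen And) (Id 1)) (Gen And)" 3 "Seq (Par (Id 1) (Gen And)) (Gen And)" "[e1, e2, e3]" a]
    eqv.and_assoc by (simp add: vs3)

lemma R_mlunit: "vb a e \<Longrightarrow> RR a (Ml On e) e"
  using AX[of "Seq (Par (Gen One) (Id 1)) (Gen And)" 1 "Id 1" "[e]" a] eqv.and_unit by (simp add: vs1)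

lemma R_idem: "vb a e \<Longrightarrow> RR a (Ml e e) e"
  using AX[of "Seq (Gen Copy) (Gen And)" 1 "Id 1" "[e]" a] eqv.copy_and by (simp add: vs1)

lemma R_nil: "vb a e \<Longrightarrow> RR a (Pl e e) Zr"
  using AX[of "Seq (Gen Copy) (Gen Add)" 1 "Seq (Gen Discard) (Gen Zero)" "[e]" a] eqv.copy_add
  by (simp add: vs1)

lemma R_dist: "vb a e1 \<Longrightarrow> vb a e2 \<Longrightarrow> vb a e3 \<Longrightarrow> RR a (Ml e1 (Pl e2 e3)) (Pl (Ml e1 e2) (Ml e1 e3))"
  using AX[of "Seq (Par (Id 1) (Gen Add)) (Gen And)" 3
      "Seq (Seq (Seq (Par (Gen Copy) (Id 2)) (Par (Id 1) (Par Sym (Id 1)))) (Par (Gen And) (Gen And))) (Gen Add)"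
      "[e1, e2, e3]" a]
    eqv.distrib by (simp add: vs3)



lemma R_plcong: "RR a e1 e1' \<Longrightarrow> RR a e2 e2' \<Longrightarrow> RR a (Pl e1 e2) (Pl e1' e2')"
  by simp (rule BNcong)
lemma R_mlcong: "RR a e1 e1' \<Longrightarrow> RR a e2 e2' \<Longrightarrow> RR a (Ml e1 e2) (Ml e1' e2')"
  by simp (rule BNcong)

declare tr.simps[simp del]

lemma R_plunitr: "vb a e \<Longrightarrow> RR a (Pl e Zr) e"
  by (rule eqv.trans, rule R_plcomm, simp, simp, rule R_plunit)

lemma R_mlunitr: "vb a e \<Longrightarrow> RR a (Ml e On) e"
  by (rule eqv.trans, rule R_mlcomm, simp, simp, rule R_mlunit)

lemma R_mlzero: "vb a e \<Longrightarrow> RR a (Ml Zr e) Zr"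
proof -
  assume e: "vb a e"
  have "RR a (Ml Zr e) (Ml (Pl e e) e)" by (rule R_mlcong, rule eqv.sym, rule R_nil[OF e], rule E_refl)
  also have "RR a (Ml (Pl e e) e) (Ml e (Pl e e))" by (rule R_mlcomm) (simp_all add: e)
  also have "RR a (Ml e (Pl e e)) (Pl (Ml e e) (Ml e e))" by (rule R_dist) (simp_all add: e)
  also have "RR a (Pl (Ml e e) (Ml e e)) (Pl e e)" by (rule R_plcong; rule R_idem[OF e])
  also have "RR a (Pl e e) Zr" by (rule R_nil[OF e])
  finally show ?thesis .
qed

lemma R_mlzeror: "vb a e \<Longrightarrow> RR a (Ml e Zr) Zr"
  by (rule eqv.trans, rule R_mlcomm, simp, simp, rule R_mlzero)

lemma R_distr: "vb a e1 \<Longrightarrow> vb a e2 \<Longrightarrow> vb a e3 \<Longrightarrow> RR a (Ml (Pl e1 e2) e3) (Pl (Ml e1 e3) (Ml e2 e3))"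
proof -
  assume e: "vb a e1" "vb a e2" "vb a e3"
  have "RR a (Ml (Pl e1 e2) e3) (Ml e3 (Pl e1 e2))" by (rule R_mlcomm) (simp_all add: e)
  also have "RR a (Ml e3 (Pl e1 e2)) (Pl (Ml e3 e1) (Ml e3 e2))" by (rule R_dist) (simp_all add: e)
  also have "RR a (Pl (Ml e3 e1) (Ml e3 e2)) (Pl (Ml e1 e3) (Ml e2 e3))"
    by (rule R_plcong; rule R_mlcomm) (simp_all add: e)
  finally show ?thesis .
qed

section \<open>Normal forms\<close>

definition ins :: "nat \<Rightarrow> nat list \<Rightarrow> nat list" where
  "ins x xs = (if x \<in> set xs then xs else x # xs)"

definition mmul :: "nat list \<Rightarrow> nat list \<Rightarrow> nat list" where
  "mmul m1 m2 = foldr ins m1 m2"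

fun mon :: "nat list \<Rightarrow> expr" where
  "mon [] = On" | "mon (x # xs) = Ml (V x) (mon xs)"

fun toE :: "nat list list \<Rightarrow> expr" where
  "toE [] = Zr" | "toE (m # p) = Pl (mon m) (toE p)"

definition pmul :: "nat list list \<Rightarrow> nat list list \<Rightarrow> nat list list" where
  "pmul p q = concat (map (\<lambda>m. map (mmul m) q) p)"

fun nf :: "expr \<Rightarrow> nat list list" where
  "nf (V i) = [[i]]" | "nf Zr = []" | "nf On = [[]]"
| "nf (Pl e1 e2) = nf e1 @ nf e2" | "nf (Ml e1 e2) = pmul (nf e1) (nf e2)"

lemma set_ins[simp]: "set (ins x xs) = insert x (set xs)" by (auto simp: ins_def)
lemma set_mmul[simp]: "set (mmul m1 m2) = set m1 \<union> set m2"
  by (induction m1) (auto simp: mmul_def)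
lemma distinct_ins[simp]: "distinct xs \<Longrightarrow> distinct (ins x xs)" by (auto simp: ins_def)
lemma distinct_mmul[simp]: "distinct m2 \<Longrightarrow> distinct (mmul m1 m2)"
  by (induction m1) (auto simp: mmul_def)

lemma vb_mon[simp]: "vb a (mon m) = (\<forall>x\<in>set m. x < a)" by (induction m) auto
lemma vb_toE[simp]: "vb a (toE p) = (\<forall>m\<in>set p. \<forall>x\<in>set m. x < a)" by (induction p) auto

lemma nf_vb: "vb a e \<Longrightarrow> \<forall>m\<in>set (nf e). \<forall>x\<in>set m. x < a"
  by (induction e) (auto simp: pmul_def)

lemma nf_distinct: "\<forall>m\<in>set (nf e). distinct m"
  by (induction e) (auto simp: pmul_def)

lemma N_absorb: "x \<in> set xs \<Longrightarrow> x < a \<Longrightarrow> \<forall>y\<in>set xs. y < a \<Longrightarrow> RR a (Ml (V x) (mon xs)) (mon xs)"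
proof (induction xs)
  case Nil then show ?case by simp
next
  case (Cons y ys)
  show ?case
  proof (cases "x = y")
    case True
    have "RR a (Ml (V x) (Ml (V x) (mon ys))) (Ml (Ml (V x) (V x)) (mon ys))"
      by (rule eqv.sym, rule R_mlassoc) (use Cons.prems in auto)
    also have "RR a (Ml (Ml (V x) (V x)) (mon ys)) (Ml (V x) (mon ys))"
      using Cons.prems True by (intro R_mlcong R_idem E_refl) simp
    finally show ?thesis using True by simp
  next
    case False
    then have x: "x \<in> set ys" using Cons.prems by simp
    have "RR a (Ml (V x) (Ml (V y) (mon ys))) (Ml (Ml (V x) (V y)) (mon ys))"
      by (rule eqv.sym, rule R_mlassoc) (use Cons.prems in auto)
    also have "RR a (Ml (Ml (V x) (V y)) (mon ys)) (Ml (Ml (V y) (V x)) (mon ys))"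
      by (rule R_mlcong, rule R_mlcomm, simp_all add: E_refl) (use Cons.prems False in auto)
    also have "RR a (Ml (Ml (V y) (V x)) (mon ys)) (Ml (V y) (Ml (V x) (mon ys)))"
      by (rule R_mlassoc) (use Cons.prems in auto)
    also have "RR a (Ml (V y) (Ml (V x) (mon ys))) (Ml (V y) (mon ys))"
      by (rule R_mlcong, rule E_refl, rule Cons.IH) (use Cons.prems x in auto)
    finally show ?thesis by simp
  qed
qed

lemma N_ins: "x < a \<Longrightarrow> \<forall>y\<in>set xs. y < a \<Longrightarrow> RR a (mon (ins x xs)) (Ml (V x) (mon xs))"
  by (cases "x \<in> set xs") (auto simp: ins_def intro: eqv.sym N_absorb E_refl)

lemma N_mmul: "\<forall>y\<in>set m1. y < a \<Longrightarrow> \<forall>y\<in>set m2. y < a \<Longrightarrow> RR a (mon (mmul m1 m2)) (Ml (mon m1) (mon m2))"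
proof (induction m1)
  case Nil then show ?case by (simp add: mmul_def) (rule eqv.sym, rule R_mlunit, simp)
next
  case (Cons x m1)
  have "mon (mmul (x # m1) m2) = mon (ins x (mmul m1 m2))" by (simp add: mmul_def)
  also have "RR a (mon (ins x (mmul m1 m2))) (Ml (V x) (mon (mmul m1 m2)))"
    by (rule N_ins) (use Cons.prems in auto)
  also have "RR a (Ml (V x) (mon (mmul m1 m2))) (Ml (V x) (Ml (mon m1) (mon m2)))"
    by (rule R_mlcong, rule E_refl, rule Cons.IH) (use Cons.prems in auto)
  also have "RR a (Ml (V x) (Ml (mon m1) (mon m2))) (Ml (Ml (V x) (mon m1)) (mon m2))"
    by (rule eqv.sym, rule R_mlassoc) (use Cons.prems in auto)
  finally show ?case by simp
qed

lemma N_app: "\<forall>m\<in>set p. \<forall>x\<in>set m. x < a \<Longrightarrow> \<forall>m\<in>set q. \<forall>x\<in>set m. x < a \<Longrightarrow>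
  RR a (toE (p @ q)) (Pl (toE p) (toE q))"
proof (induction p)
  case Nil then show ?case by simp (rule eqv.sym, rule R_plunit, simp)
next
  case (Cons m p)
  have "RR a (Pl (mon m) (toE (p @ q))) (Pl (mon m) (Pl (toE p) (toE q)))"
    by (rule R_plcong, rule E_refl, rule Cons.IH) (use Cons.prems in auto)
  also have "RR a (Pl (mon m) (Pl (toE p) (toE q))) (Pl (Pl (mon m) (toE p)) (toE q))"
    by (rule eqv.sym, rule R_plassoc) (use Cons.prems in auto)
  finally show ?case by simp
qed

lemma N_mapmul: "\<forall>x\<in>set m. x < a \<Longrightarrow> \<forall>m\<in>set q. \<forall>x\<in>set m. x < a \<Longrightarrow>
  RR a (toE (map (mmul m) q)) (Ml (mon m) (toE q))"
proof (induction q)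
  case Nil then show ?case by simp (rule eqv.sym, rule R_mlzeror, simp)
next
  case (Cons m2 q)
  have "RR a (Pl (mon (mmul m m2)) (toE (map (mmul m) q))) (Pl (Ml (mon m) (mon m2)) (Ml (mon m) (toE q)))"
  proof (rule R_plcong)
    show "RR a (mon (mmul m m2)) (Ml (mon m) (mon m2))" by (rule N_mmul) (use Cons.prems in auto)
    show "RR a (toE (map (mmul m) q)) (Ml (mon m) (toE q))" by (rule Cons.IH) (use Cons.prems in auto)
  qed
  also have "RR a (Pl (Ml (mon m) (mon m2)) (Ml (mon m) (toE q))) (Ml (mon m) (Pl (mon m2) (toE q)))"
    by (rule eqv.sym, rule R_dist) (use Cons.prems in auto)
  finally show ?case by simp
qed

lemma N_pmul: "\<forall>m\<in>set p. \<forall>x\<in>set m. x < a \<Longrightarrow> \<forall>m\<in>set q. \<forall>x\<in>set m. x < a \<Longrightarrow>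
  RR a (toE (pmul p q)) (Ml (toE p) (toE q))"
proof (induction p)
  case Nil then show ?case by (simp add: pmul_def) (rule eqv.sym, rule R_mlzero, simp)
next
  case (Cons m p)
  have "toE (pmul (m # p) q) = toE (map (mmul m) q @ pmul p q)" by (simp add: pmul_def)
  also have "RR a (toE (map (mmul m) q @ pmul p q)) (Pl (toE (map (mmul m) q)) (toE (pmul p q)))"
    by (rule N_app) (use Cons.prems in \<open>auto simp: pmul_def\<close>)
  also have "RR a (Pl (toE (map (mmul m) q)) (toE (pmul p q))) (Pl (Ml (mon m) (toE q)) (Ml (toE p) (toE q)))"
  proof (rule R_plcong)
    show "RR a (toE (map (mmul m) q)) (Ml (mon m) (toE q))" by (rule N_mapmul) (use Cons.prems in auto)
    show "RR a (toE (pmul p q)) (Ml (toE p) (toE q))" by (rule Cons.IH) (use Cons.prems in auto)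
  qed
  also have "RR a (Pl (Ml (mon m) (toE q)) (Ml (toE p) (toE q))) (Ml (Pl (mon m) (toE p)) (toE q))"
    by (rule eqv.sym, rule R_distr) (use Cons.prems in auto)
  finally show ?case by simp
qed

lemma N_nf: "vb a e \<Longrightarrow> RR a e (toE (nf e))"
proof (induction e)
  case (V i)
  have "RR a (V i) (Ml (V i) On)" by (rule eqv.sym, rule R_mlunitr) (use V in simp)
  also have "RR a (Ml (V i) On) (Pl (Ml (V i) On) Zr)" by (rule eqv.sym, rule R_plunitr) (use V in simp)
  finally show ?case by simp
next
  case Zr then show ?case by (simp add: E_refl)
next
  case On then show ?case by simp (rule eqv.sym, rule R_plunitr, simp)
next
  case (Pl e1 e2)
  have "RR a (Pl e1 e2) (Pl (toE (nf e1)) (toE (nf e2)))" using Pl by (intro R_plcong) auto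
  also have "RR a (Pl (toE (nf e1)) (toE (nf e2))) (toE (nf e1 @ nf e2))"
    by (rule eqv.sym, rule N_app) (use Pl.prems nf_vb in auto)
  finally show ?case by simp
next
  case (Ml e1 e2)
  have "RR a (Ml e1 e2) (Ml (toE (nf e1)) (toE (nf e2)))" using Ml by (intro R_mlcong) auto
  also have "RR a (Ml (toE (nf e1)) (toE (nf e2))) (toE (pmul (nf e1) (nf e2)))"
    by (rule eqv.sym, rule N_pmul) (use Ml.prems nf_vb in auto)
  finally show ?case by simp
qed



fun sexp :: "expr \<Rightarrow> bool" where
  "sexp (V i) = True" | "sexp Zr = True" | "sexp On = True"
| "sexp (Pl e1 e2) = (sexp e1 \<and> sexp e2)"
| "sexp (Ml e1 e2) = (sexp e1 \<and> sexp e2 \<and> vars e1 \<inter> vars e2 = {})"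

lemma vars_mon[simp]: "vars (mon m) = set m" by (induction m) auto

lemma sexp_mon: "distinct m \<Longrightarrow> sexp (mon m)" by (induction m) auto

lemma sexp_toE: "\<forall>m\<in>set p. distinct m \<Longrightarrow> sexp (toE p)" by (induction p) (auto simp: sexp_mon)

fun af :: "circ \<Rightarrow> bool" where
  "af (Gen g) = (g \<noteq> And)" | "af (Id n) = True" | "af Sym = True"
| "af (Seq f g) = (af f \<and> af g)" | "af (Par f g) = (af f \<and> af g)"

lemma af_safe: "af c \<Longrightarrow> safe_in ds c"
  by (induction c arbitrary: ds) auto

lemma af_braid[simp]: "af (braid n)" by (induction n) auto
lemma af_copyn[simp]: "af (copyn n)" by (induction n) auto
lemma af_discardn[simp]: "af (discardn n)" by (induction n) auto
lemma af_proj[simp]: "af (proj n i)" by (simp add: proj_def)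

lemma cdom_braid[simp]: "cdom (braid n) = Suc n" using cdom_ty[OF ty_braid] .
lemma cdom_copyn[simp]: "cdom (copyn n) = n" using cdom_ty[OF ty_copyn] .
lemma cdom_discardn[simp]: "cdom (discardn n) = n" using cdom_ty[OF ty_discardn] .

lemma od_discardn[simp]: "length ds = n \<Longrightarrow> outdeps ds (discardn n) = []"
  by (induction n arbitrary: ds) auto

lemma od_braid: "length ds = n \<Longrightarrow> outdeps (d # ds) (braid n) = ds @ [d]"
proof (induction n arbitrary: d ds)
  case 0 then show ?case by simp
next
  case (Suc n)
  then obtain d' ds' where ds: "ds = d' # ds'" "length ds' = n" by (cases ds) auto
  show ?case using Suc.IH[OF ds(2)] ds by (simp add: numeral_eq_Suc)
qed

lemma od_copyn: "length ds = n \<Longrightarrow> outdeps ds (copyn n) = ds @ ds"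
proof (induction n arbitrary: ds)
  case 0 then show ?case by simp
next
  case (Suc n)
  then obtain d ds' where ds: "ds = d # ds'" "length ds' = n" by (cases ds) auto
  have "outdeps ds (copyn (Suc n)) = outdeps (d # d # ds' @ ds') (Par (Id 1) (Par (braid n) (Id n)))"
    using Suc.IH[OF ds(2)] ds by (simp add: numeral_eq_Suc)
  also have "... = d # outdeps (d # ds' @ ds') (Par (braid n) (Id n))" by simp
  also have "... = d # ds' @ [d] @ ds'" using od_braid[OF ds(2)] ds(2) by simp
  finally show ?case using ds by simp
qed

lemma od_proj: "length ds = n \<Longrightarrow> i < n \<Longrightarrow> outdeps ds (proj n i) = [ds ! i]"
  by (simp add: proj_def take_Suc_conv_app_nth hd_drop_conv_nth)

definition sg :: "nat \<Rightarrow> nat set list" where "sg a = map (\<lambda>i. {i}) [0..<a]"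

lemma length_sg[simp]: "length (sg a) = a" by (simp add: sg_def)

lemma cdom_tr[simp]: "vb a e \<Longrightarrow> cdom (tr a e) = a" using cdom_ty[OF ty_tr] .

lemma od_tr: "vb a e \<Longrightarrow> outdeps (sg a) (tr a e) = [vars e]"
proof (induction e)
  case (V i) then show ?case by (simp add: tr.simps od_proj) (simp add: sg_def)
next
  case Zr then show ?case by (simp add: tr.simps)
next
  case On then show ?case by (simp add: tr.simps)
next
  case (Pl e1 e2) then show ?case by (simp add: tr.simps bin_def od_copyn)
next
  case (Ml e1 e2) then show ?case by (simp add: tr.simps bin_def od_copyn)
qed

lemma safe_tr: "vb a e \<Longrightarrow> sexp e \<Longrightarrow> safe_in (sg a) (tr a e)"
proof (induction e)
  case (V i) then show ?case by (simp add: tr.simps af_safe)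
next
  case Zr then show ?case by (simp add: tr.simps af_safe)
next
  case On then show ?case by (simp add: tr.simps af_safe)
next
  case (Pl e1 e2) then show ?case by (simp add: tr.simps bin_def od_copyn af_safe)
next
  case (Ml e1 e2) then show ?case by (simp add: tr.simps bin_def od_copyn af_safe od_tr)
qed

lemma safe_tup: "\<forall>t\<in>set ts. safe_in (sg a) t \<and> cdom t = a \<Longrightarrow> safe_in (sg a) (tup a ts)"
  by (induction ts) (auto simp: af_safe od_copyn)

theorem mainTheorem4:
  assumes "typed c a b"
  shows "\<exists>d. typed d a b \<and> safe d \<and> eqv c d"
proof -
  have c: "ty c = Some (a, b)" using assms by (simp add: typed_iff)
  let ?e = "\<lambda>j. interp c (vs a) ! j"
  let ?d = "tup a (map (\<lambda>j. tr a (toE (nf (?e j)))) [0..<b])"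
  have vbe: "vb a (?e j)" if "j < b" for j
    using interp_vb[OF c, of "vs a" a] vb_vs interp_len[OF c, of "vs a"] that by auto
  have vbn: "vb a (toE (nf (?e j)))" if "j < b" for j
    using nf_vb[OF vbe[OF that]] by simp
  have "c \<approx> tup a (map (\<lambda>j. tr a (?e j)) [0..<b])" by (rule T[OF c])
  also have "... \<approx> ?d"
    by (rule TUPcong) (auto simp: list_all2_conv_all_nth intro: N_nf vbe)
  finally have eq: "c \<approx> ?d" .
  have ty: "ty ?d = Some (a, b)" using vbn by simp
  have "safe_in (sg a) ?d"
    by (rule safe_tup) (auto intro!: safe_tr sexp_toE nf_distinct vbn simp: cdom_tr[OF vbn])
  then have "safe ?d" using cdom_ty[OF ty] by (simp add: safe_def sg_def)
  then show ?thesis using eq ty by (auto simp: typed_iff)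
qed

end
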